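(* Fix $n\ge1$ and let $\mathcal A_n=\{(a_1,\dots,a_n):a_k\in\mathbb Z_{\ge0},\ \sum_{i=1}^n ia_i=n\}$. For integers $K\ge n$ and $\theta>0$, let $\mathbf A_n$ be the $\mathcal A_n$-valued random variable (the allele-count partition of a sample of size $n$ from a symmetric $\mathrm{Dirichlet}(\frac\theta K,\dots,\frac\theta K)$ population with $K$ alleles) with distribution $$P\{\mathbf A_n=\mathbf a\}=\frac{n!}{\prod_{j=1}^n a_j!}\,\frac{K!}{(K-\sum_{i=1}^n a_i)!}\,\frac{1}{\theta_{(n)}}\prod_{j=1}^n\Big(\frac{\Gamma(j+\theta/K)}{j!\,\Gamma(\theta/K)}\Big)^{a_j},$$ where $\theta_{(n)}=\theta(\theta+1)\cdots(\theta+n-1)$. Assume $\theta=\theta(K)$ grows with $K$ and $\lim_{K\to\infty}\theta/K=c\in(0,+\infty]$. Then, as $K\to\infty$, the family of laws of $\mathbf A_n$ satisfies an LDP on $\mathcal A_n$ with speed $\log K$ and rate function $I_{\mathrm{esf}}(\mathbf a)=n-\sum_{i=1}^n a_i$.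
   Context: An LDP with speed $\log K$ uses normalization $(\log K)^{-1}\log$ as $K\to\infty$. *)

theory Defs
  imports "HOL-Analysis.Analysis"
begin

definition elog :: "real \<Rightarrow> ereal" where
  "elog p = (if p \<le> 0 then - \<infinity> else ereal (ln p))"

definition ldp :: "(nat \<Rightarrow> 'a set \<Rightarrow> real) \<Rightarrow> (nat \<Rightarrow> real) \<Rightarrow> ('a \<Rightarrow> ereal) \<Rightarrow> 'a topology \<Rightarrow> bool"
  where "ldp P s I T \<longleftrightarrow>
     (\<forall>x\<in>topspace T. I x \<ge> 0) \<and>
     (\<forall>\<alpha>::real. closedin T {x \<in> topspace T. I x \<le> ereal \<alpha>}) \<and>
     (\<forall>F. closedin T F \<longrightarrow>
        limsup (\<lambda>K. ereal (1 / s K) * elog (P K F)) \<le> - (INF x\<in>F. I x)) \<and>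
     (\<forall>G. openin T G \<longrightarrow>
        liminf (\<lambda>K. ereal (1 / s K) * elog (P K G)) \<ge> - (INF x\<in>G. I x))"

text \<open>The state space A_n; a = [a_1, ..., a_n] is stored as a list with a_j = a ! (j-1).\<close>
definition alloc_space :: "nat \<Rightarrow> nat list set" where
  "alloc_space n = {a. length a = n \<and> (\<Sum>i<n. (i + 1) * a ! i) = n}"

definition dirichlet_pmf :: "nat \<Rightarrow> nat \<Rightarrow> real \<Rightarrow> nat list \<Rightarrow> real" where
  "dirichlet_pmf n K \<theta> a =
     fact n / (\<Prod>j<n. fact (a ! j))
     * fact K / fact (K - (\<Sum>i<n. a ! i))
     * (1 / pochhammer \<theta> n)
     * (\<Prod>j<n. (Gamma (real (j + 1) + \<theta> / real K)
                   / (fact (j + 1) * Gamma (\<theta> / real K))) ^ (a ! j))"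

definition dirichlet_law :: "nat \<Rightarrow> nat \<Rightarrow> real \<Rightarrow> nat list set \<Rightarrow> real" where
  "dirichlet_law n K \<theta> B = (\<Sum>a\<in>B \<inter> alloc_space n. dirichlet_pmf n K \<theta> a)"

definition I_esf :: "nat \<Rightarrow> nat list \<Rightarrow> ereal" where
  "I_esf n a = ereal (real n - (\<Sum>i<n. real (a ! i)))"

end

theory Submission imports Defs begin

lemma poch_lower: "(x::real) > 0 \<Longrightarrow> x ^ k \<le> pochhammer x k"
proof (induction k)
  case (Suc k)
  have "x ^ Suc k = x^k * x" by simp
  also have "\<dots> \<le> pochhammer x k * (x + of_nat k)"
    using Suc by (intro mult_mono) (auto intro: order_trans[OF zero_le_power[of x k]])
  finally show ?case by (simp add: pochhammer_Suc)
qed simp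

lemma poch_upper: "(x::real) > 0 \<Longrightarrow> pochhammer x k \<le> (x + real k) ^ k"
proof (induction k)
  case (Suc k)
  have "pochhammer x (Suc k) = pochhammer x k * (x + of_nat k)" by (simp add: pochhammer_Suc)
  also have "\<dots> \<le> (x + real (Suc k)) ^ k * (x + real (Suc k))"
  proof (intro mult_mono)
    have "(x + real k) ^ k \<le> (x + real (Suc k)) ^ k" using Suc by (intro power_mono) auto
    then show "pochhammer x k \<le> (x + real (Suc k)) ^ k" using Suc by linarith
  qed (use Suc in auto)
  finally show ?case by (simp add: mult.commute)
qed simp

lemma fact_bounds: "fact d * real d ^ m \<le> (fact (d + m) :: real) \<and> fact (d+m) \<le> fact d * real (d+m) ^ m"
proof (induction m)
  case (Suc m)
  have e: "(fact (d + Suc m) :: real) = real (d + Suc m) * fact (d + m)" by simp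
  have "fact d * real d ^ Suc m = (fact d * real d ^ m) * real d" by simp
  also have "\<dots> \<le> fact (d+m) * real (d + Suc m)" using Suc by (intro mult_mono) auto
  finally have 1: "fact d * real d ^ Suc m \<le> fact (d + Suc m)" using e by (simp add: mult.commute)
  have "fact (d + m) * real (d + Suc m) \<le> (fact d * real (d + Suc m) ^ m) * real (d + Suc m)"
  proof (rule mult_right_mono)
    have "real (d+m) ^ m \<le> real (d + Suc m) ^ m" by (intro power_mono) auto
    then show "fact (d + m) \<le> fact d * real (d + Suc m) ^ m"
      using Suc by (meson dual_order.trans fact_ge_zero mult_left_mono)
  qed auto
  then have 2: "fact (d + Suc m) \<le> fact d * real (d + Suc m) ^ Suc m" using e by (simp add: mult.commute mult.left_commute)
  show ?case using 1 2 by blast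
qed simp

lemma lim_from_bounds:
  fixes f :: "nat \<Rightarrow> real"
  assumes A: "A > 0" and B: "B > 0"
    and ev: "eventually (\<lambda>K. A * real K ^ p \<le> f K * real K ^ q \<and> f K * real K ^ q \<le> B * real K ^ p) sequentially"
  shows "((\<lambda>K. ereal (1 / ln (real K)) * elog (f K)) \<longlongrightarrow> ereal (real p - real q)) sequentially"
proof -
  have lnK: "LIM K sequentially. ln (real K) :> at_top"
    using filterlim_compose[OF ln_at_top filterlim_real_sequentially] .
  have lnKi: "LIM K sequentially. ln (real K) :> at_infinity"
    using filterlim_at_top_imp_at_infinity[OF lnK] .
  have lA: "((\<lambda>K. ln A / ln (real K)) \<longlongrightarrow> 0) sequentially"
    by (rule tendsto_divide_0[OF tendsto_const lnKi])
  have lB: "((\<lambda>K. ln B / ln (real K)) \<longlongrightarrow> 0) sequentially"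
    by (rule tendsto_divide_0[OF tendsto_const lnKi])
  have ev2: "eventually (\<lambda>K. K \<ge> 2) sequentially" by (rule eventually_ge_at_top)
  have key: "eventually (\<lambda>K. f K > 0 \<and> ln A / ln (real K) \<le> ln (f K) / ln (real K) - (real p - real q)
       \<and> ln (f K) / ln (real K) - (real p - real q) \<le> ln B / ln (real K)) sequentially"
    using ev ev2
  proof eventually_elim
    case (elim K)
    have Kp: "real K > 1" using elim by auto
    have lK: "ln (real K) > 0" using Kp by simp
    have Kq: "real K ^ q > 0" "real K ^ p > 0" using Kp by auto
    have "0 < A * real K ^ p" using A Kq by simp
    also have "\<dots> \<le> f K * real K ^ q" using elim by blast
    finally have fpos: "f K > 0" using Kq by (simp add: zero_less_mult_iff)
    have lf: "ln (f K * real K ^ q) = ln (f K) + real q * ln (real K)"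
      using fpos Kq by (simp add: ln_mult ln_realpow)
    have l1: "ln A + real p * ln (real K) \<le> ln (f K) + real q * ln (real K)"
    proof -
      have "ln (A * real K ^ p) \<le> ln (f K * real K ^ q)"
        using elim A Kq fpos by (subst ln_le_cancel_iff) auto
      then show ?thesis using lf A Kq Kp by (simp add: ln_mult ln_realpow)
    qed
    have l2: "ln (f K) + real q * ln (real K) \<le> ln B + real p * ln (real K)"
    proof -
      have "ln (f K * real K ^ q) \<le> ln (B * real K ^ p)"
        using elim B Kq fpos by (subst ln_le_cancel_iff) auto
      then show ?thesis using lf B Kq Kp by (simp add: ln_mult ln_realpow)
    qed
    have e: "ln (f K) / ln (real K) - (real p - real q) = (ln (f K) + real q * ln (real K) - real p * ln (real K)) / ln (real K)"
      using lK by (simp add: field_simps)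
    show ?case using l1 l2 lK fpos unfolding e by (auto simp: divide_right_mono)
  qed
  have "((\<lambda>K. ln (f K) / ln (real K) - (real p - real q)) \<longlongrightarrow> 0) sequentially"
    by (rule tendsto_sandwich[OF _ _ lA lB]) (use key in \<open>auto elim: eventually_mono\<close>)
  then have r: "((\<lambda>K. ln (f K) / ln (real K)) \<longlongrightarrow> real p - real q) sequentially"
    using tendsto_add_const_iff[of "real p - real q" "\<lambda>K. ln (f K) / ln (real K) - (real p - real q)" 0 sequentially] by simp
  have "((\<lambda>K. ereal (ln (f K) / ln (real K))) \<longlongrightarrow> ereal (real p - real q)) sequentially"
    using r by (rule tendsto_ereal)
  then show ?thesis
  proof (rule Lim_transform_eventually)
    show "eventually (\<lambda>K. ereal (ln (f K) / ln (real K)) = ereal (1 / ln (real K)) * elog (f K)) sequentially"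
      using key by eventually_elim (auto simp: elog_def)
  qed
qed

lemma prod_pow_alloc:
  assumes a: "a \<in> alloc_space n"
  shows "(\<Prod>j<n. ((Y::real) ^ (j+1) / fact (j+1)) ^ (a!j)) = Y ^ n / (\<Prod>j<n. (fact (j+1)::real) ^ (a!j))"
proof -
  have "(\<Prod>j<n. (Y ^ (j+1) / fact (j+1)) ^ (a!j)) = (\<Prod>j<n. Y ^ ((j+1) * a!j) / (fact (j+1)::real) ^ (a!j))"
    by (intro prod.cong refl) (simp only: power_divide power_mult)
  also have "\<dots> = (\<Prod>j<n. Y ^ ((j+1) * a!j)) / (\<Prod>j<n. (fact (j+1)::real) ^ (a!j))"
    by (rule prod_dividef)
  also have "(\<Prod>j<n. Y ^ ((j+1) * a!j)) = Y ^ (\<Sum>j<n. (j+1) * a!j)"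
    by (simp add: power_sum)
  also have "(\<Sum>j<n. (j+1) * a!j) = n" using a by (simp add: alloc_space_def)
  finally show ?thesis .
qed

lemma pmf_bounds:
  fixes \<theta> :: "nat \<Rightarrow> real"
  assumes \<delta>: "\<delta> > 0" and ev: "eventually (\<lambda>K. \<delta> < \<theta> K / real K) sequentially"
    and a: "a \<in> alloc_space n"
  shows "\<exists>C1 C2. C1 > 0 \<and> C2 > 0 \<and> eventually (\<lambda>K.
      C1 * real K ^ (\<Sum>i<n. a!i) \<le> dirichlet_pmf n K (\<theta> K) a * real K ^ n \<and>
      dirichlet_pmf n K (\<theta> K) a * real K ^ n \<le> C2 * real K ^ (\<Sum>i<n. a!i)) sequentially"
proof -
  define m where "m = (\<Sum>i<n. a!i)"
  define D :: real where "D = (\<Prod>j<n. (fact (j+1)::real) ^ (a!j))"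
  define C0 :: real where "C0 = fact n / (\<Prod>j<n. fact (a ! j))"
  define L :: real where "L = 1 + real n / \<delta>"
  have Dpos: "D > 0" unfolding D_def by (intro prod_pos) auto
  have C0pos: "C0 > 0" unfolding C0_def by (intro divide_pos_pos prod_pos) auto
  have Lpos: "L > 0" unfolding L_def using \<delta> by (simp add: add_pos_nonneg)
  have evK: "eventually (\<lambda>K. K \<ge> max 1 (2*m)) sequentially" by (rule eventually_ge_at_top)
  have "eventually (\<lambda>K.
      C0 / (2^m * D * L^n) * real K ^ m \<le> dirichlet_pmf n K (\<theta> K) a * real K ^ n \<and>
      dirichlet_pmf n K (\<theta> K) a * real K ^ n \<le> C0 * L^n / D * real K ^ m) sequentially"
    using ev evK
  proof eventually_elim
    case (elim K)
    define X where "X = \<theta> K / real K"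
    define T where "T = \<theta> K"
    have K1: "real K \<ge> 1" and K2: "real K \<ge> 2 * real m" using elim by auto
    have Xd: "X > \<delta>" using elim X_def by simp
    have Xpos: "X > 0" using Xd \<delta> by simp
    have TX: "T = X * real K" using K1 unfolding X_def T_def by simp
    have Td: "T \<ge> \<delta>" using TX Xd K1
      by (metis Xpos less_eq_real_def mult.right_neutral mult_left_mono order_trans)
    have Tpos: "T > 0" using Td \<delta> by simp
    have XL: "X + real n \<le> X * L"
    proof -
      have "real n \<le> X * (real n / \<delta>)"
        using Xd \<delta> by (simp add: field_simps mult_right_mono)
      then show ?thesis unfolding L_def by (simp add: algebra_simps)
    qed
    have TL: "T + real n \<le> T * L"
    proof -
      have "real n \<le> T * (real n / \<delta>)"
        using Td \<delta> by (simp add: field_simps mult_right_mono)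
      then show ?thesis unfolding L_def by (simp add: algebra_simps)
    qed
    define g where "g j = pochhammer X (j+1) / fact (j+1)" for j
    have gam: "Gamma (real (j + 1) + X) / (fact (j + 1) * Gamma X) = g j" for j
    proof -
      have "X \<notin> \<int>\<^sub>\<le>\<^sub>0" using Xpos by auto
      then have "pochhammer X (j+1) = Gamma (X + of_nat (j+1)) / Gamma X" by (rule pochhammer_Gamma)
      then show ?thesis unfolding g_def by (simp add: add.commute)
    qed
    define Pj where "Pj = (\<Prod>j<n. g j ^ (a!j))"
    define Fa :: real where "Fa = fact K / fact (K - m)"
    define P\<theta> where "P\<theta> = pochhammer T n"
    have pmf_eq: "dirichlet_pmf n K (\<theta> K) a = C0 * Fa * (1 / P\<theta>) * Pj"
      unfolding dirichlet_pmf_def Pj_def C0_def Fa_def P\<theta>_def m_def T_def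
      using gam unfolding X_def by simp
    have Pj_lo: "X ^ n / D \<le> Pj"
    proof -
      have "X ^ n / D = (\<Prod>j<n. (X ^ (j+1) / fact (j+1)) ^ (a!j))"
        using prod_pow_alloc[OF a] D_def by simp
      also have "\<dots> \<le> Pj" unfolding Pj_def g_def using Xpos
        by (intro prod_mono conjI power_mono divide_right_mono poch_lower Xpos) auto
      finally show ?thesis .
    qed
    have Pj_hi: "Pj \<le> (X * L) ^ n / D"
    proof -
      have "Pj \<le> (\<Prod>j<n. ((X * L) ^ (j+1) / fact (j+1)) ^ (a!j))" unfolding Pj_def g_def
      proof (intro prod_mono conjI power_mono divide_right_mono)
        fix j assume j: "j \<in> {..<n}"
        have "pochhammer X (j+1) \<le> (X + real (j+1)) ^ (j+1)" by (rule poch_upper[OF Xpos])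
        also have "\<dots> \<le> (X * L) ^ (j+1)"
          using j XL Xpos by (intro power_mono) auto
        finally show "pochhammer X (j+1) \<le> (X * L) ^ (j+1)" .
        show "0 \<le> pochhammer X (j + 1) / fact (j + 1)"
          using Xpos by (simp add: pochhammer_nonneg)
        then show "0 \<le> (pochhammer X (j + 1) / fact (j + 1)) ^ (a!j)" by simp
      qed auto
      also have "\<dots> = (X * L) ^ n / D"
        using prod_pow_alloc[OF a] D_def by simp
      finally show ?thesis .
    qed
    have P\<theta>_lo: "T ^ n \<le> P\<theta>" unfolding P\<theta>_def by (rule poch_lower[OF Tpos])
    have P\<theta>_hi: "P\<theta> \<le> (T * L) ^ n"
    proof -
      have "P\<theta> \<le> (T + real n) ^ n" unfolding P\<theta>_def by (rule poch_upper[OF Tpos])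
      also have "\<dots> \<le> (T * L) ^ n" using TL Tpos by (intro power_mono) auto
      finally show ?thesis .
    qed
    have mK: "m \<le> K" using elim by auto
    have fb: "fact (K - m) * real (K - m) ^ m \<le> (fact K :: real) \<and> (fact K :: real) \<le> fact (K - m) * real K ^ m"
      using fact_bounds[of "K - m" m] mK by simp
    have Fa_hi: "Fa \<le> real K ^ m"
      using fb unfolding Fa_def by (simp add: divide_le_eq mult.commute)
    have Fa_lo: "real K ^ m / 2 ^ m \<le> Fa"
    proof -
      have "real K ^ m / 2 ^ m = (real K / 2) ^ m" by (simp add: power_divide)
      also have "\<dots> \<le> real (K - m) ^ m" using K2 mK by (intro power_mono) (auto simp: of_nat_diff)
      also have "\<dots> \<le> Fa" using fb unfolding Fa_def by (simp add: le_divide_eq mult.commute)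
      finally show ?thesis .
    qed
    have Kn: "real K ^ n > 0" using K1 by simp
    have P\<theta>pos: "P\<theta> > 0" using P\<theta>_lo Tpos
      by (meson order_less_le_trans zero_less_power)
    have TXn: "T ^ n = X ^ n * real K ^ n" using TX by (simp add: power_mult_distrib)
    have "0 \<le> real K ^ m / 2 ^ m" by simp
    then have Fa0: "0 \<le> Fa" using Fa_lo by linarith
    have "0 \<le> X ^ n / D" using Xpos Dpos by simp
    then have Pj0: "0 \<le> Pj" using Pj_lo by linarith
    have r1: "real K ^ n / P\<theta> \<le> real K ^ n / T ^ n"
      using P\<theta>_lo Tpos Kn P\<theta>pos by (intro divide_left_mono) auto
    have r2: "real K ^ n / (T * L) ^ n \<le> real K ^ n / P\<theta>"
      using P\<theta>_hi P\<theta>pos Tpos Kn Lpos by (intro divide_left_mono) auto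
    have q1: "Fa * Pj \<le> real K ^ m * ((X * L) ^ n / D)"
      using Fa_hi Pj_hi Fa0 Pj0 K1 by (intro mult_mono) auto
    have q2: "real K ^ m / 2 ^ m * (X ^ n / D) \<le> Fa * Pj"
      using Fa_lo Pj_lo Fa0 Pj0 K1 Xpos Dpos by (intro mult_mono) auto
    have up: "Fa * Pj * (real K ^ n / P\<theta>) \<le> (real K ^ m * ((X * L) ^ n / D)) * (real K ^ n / T ^ n)"
      using q1 r1 Fa0 Pj0 P\<theta>pos Kn Xpos Lpos Dpos K1 by (rule_tac mult_mono) auto
    have lo: "(real K ^ m / 2 ^ m * (X ^ n / D)) * (real K ^ n / (T * L) ^ n) \<le> Fa * Pj * (real K ^ n / P\<theta>)"
      using q2 r2 Fa0 Pj0 P\<theta>pos Kn Tpos Lpos by (rule_tac mult_mono) auto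
    have e1: "(real K ^ m * ((X * L) ^ n / D)) * (real K ^ n / T ^ n) = L ^ n / D * real K ^ m"
      using TXn Xpos Kn Dpos K1 by (simp add: power_mult_distrib field_simps)
    have e2: "(real K ^ m / 2 ^ m * (X ^ n / D)) * (real K ^ n / (T * L) ^ n) = 1 / (2 ^ m * D * L ^ n) * real K ^ m"
      using TXn Xpos Kn Dpos Lpos K1 by (simp add: power_mult_distrib field_simps)
    have pe: "dirichlet_pmf n K (\<theta> K) a * real K ^ n = C0 * (Fa * Pj * (real K ^ n / P\<theta>))"
      unfolding pmf_eq by simp
    have u: "C0 * (Fa * Pj * (real K ^ n / P\<theta>)) \<le> C0 * (L ^ n / D * real K ^ m)"
      using mult_left_mono[OF up, of C0] C0pos unfolding e1 by simp
    have l: "C0 * (1 / (2 ^ m * D * L ^ n) * real K ^ m) \<le> C0 * (Fa * Pj * (real K ^ n / P\<theta>))"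
      using mult_left_mono[OF lo, of C0] C0pos unfolding e2 by simp
    have f1: "C0 / (2^m * D * L^n) * real K ^ m = C0 * (1 / (2 ^ m * D * L ^ n) * real K ^ m)" by simp
    have f2: "C0 * L^n / D * real K ^ m = C0 * (L ^ n / D * real K ^ m)" by simp
    show ?case unfolding pe f1 f2 using u l by blast
  qed
  then show ?thesis unfolding m_def[symmetric]
    using C0pos Dpos Lpos by (intro exI[of _ "C0 / (2^m * D * L^n)"] exI[of _ "C0 * L^n / D"]) auto
qed


lemma alloc_sum_le: "a \<in> alloc_space n \<Longrightarrow> (\<Sum>i<n. a!i) \<le> n"
proof -
  assume a: "a \<in> alloc_space n"
  have "(\<Sum>i<n. a!i) \<le> (\<Sum>i<n. (i+1) * a!i)" by (intro sum_mono) auto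
  also have "\<dots> = n" using a by (simp add: alloc_space_def)
  finally show ?thesis .
qed

lemma alloc_finite: "finite (alloc_space n)"
proof -
  have "alloc_space n \<subseteq> {xs. set xs \<subseteq> {0..n} \<and> length xs = n}"
  proof safe
    fix a x assume a: "a \<in> alloc_space n" and x: "x \<in> set a"
    then obtain i where i: "i < length a" "a ! i = x" by (auto simp: in_set_conv_nth)
    have li: "length a = n" using a by (simp add: alloc_space_def)
    have "a ! i \<le> (\<Sum>i<n. a!i)" using i li by (intro member_le_sum) auto
    then show "x \<in> {0..n}" using alloc_sum_le[OF a] i by auto
  qed (simp add: alloc_space_def)
  moreover have "finite {xs. set xs \<subseteq> {0..n} \<and> length xs = n}"
    by (rule finite_lists_length_eq) simp
  ultimately show ?thesis by (rule finite_subset)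
qed

lemma I_esf_eq: "I_esf n a = ereal (real n - real (\<Sum>i<n. a!i))"
  by (simp add: I_esf_def)

lemma key_limit:
  fixes \<theta> :: "nat \<Rightarrow> real"
  assumes \<delta>: "\<delta> > 0" and ev: "eventually (\<lambda>K. \<delta> < \<theta> K / real K) sequentially"
    and F: "F \<subseteq> alloc_space n"
  shows "((\<lambda>K. ereal (1 / ln (real K)) * elog (dirichlet_law n K (\<theta> K) F)) \<longlongrightarrow> - (INF x\<in>F. I_esf n x)) sequentially"
proof (cases "F = {}")
  case True
  have "eventually (\<lambda>K. ereal (1 / ln (real K)) * elog (dirichlet_law n K (\<theta> K) F) = - \<infinity>) sequentially"
    using eventually_ge_at_top[of 2]
  proof eventually_elim
    case (elim K)
    then have "ln (real K) > 0" by simp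
    then show ?case using True by (simp add: dirichlet_law_def elog_def)
  qed
  then have "((\<lambda>K. ereal (1 / ln (real K)) * elog (dirichlet_law n K (\<theta> K) F)) \<longlongrightarrow> - \<infinity>) sequentially"
    by (rule tendsto_eventually)
  then show ?thesis using True by (simp add: top_ereal_def)
next
  case False
  have finF: "finite F" using alloc_finite F by (rule finite_subset[rotated])
  define ms where "ms a = (\<Sum>i<n. a!i)" for a :: "nat list"
  define M where "M = Max (ms ` F)"
  have "M \<in> ms ` F" unfolding M_def using finF False by (intro Max_in) auto
  then obtain as where as: "as \<in> F" "ms as = M" by auto
  have msM: "ms a \<le> M" if "a \<in> F" for a using finF that M_def by auto
  have "\<forall>a\<in>F. \<exists>C1 C2. C1 > 0 \<and> C2 > 0 \<and> eventually (\<lambda>K.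
      C1 * real K ^ ms a \<le> dirichlet_pmf n K (\<theta> K) a * real K ^ n \<and>
      dirichlet_pmf n K (\<theta> K) a * real K ^ n \<le> C2 * real K ^ ms a) sequentially"
    using pmf_bounds[OF \<delta> ev] F unfolding ms_def by blast
  from bchoice[OF this] obtain C1 where "\<forall>a\<in>F. \<exists>C2. C1 a > 0 \<and> C2 > 0 \<and> eventually (\<lambda>K.
      C1 a * real K ^ ms a \<le> dirichlet_pmf n K (\<theta> K) a * real K ^ n \<and>
      dirichlet_pmf n K (\<theta> K) a * real K ^ n \<le> C2 * real K ^ ms a) sequentially"
    by blast
  from bchoice[OF this] obtain C2 where C: "\<forall>a\<in>F. C1 a > 0 \<and> C2 a > 0 \<and> eventually (\<lambda>K.
      C1 a * real K ^ ms a \<le> dirichlet_pmf n K (\<theta> K) a * real K ^ n \<and>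
      dirichlet_pmf n K (\<theta> K) a * real K ^ n \<le> C2 a * real K ^ ms a) sequentially"
    by blast
  have evall: "eventually (\<lambda>K. \<forall>a\<in>F. C1 a * real K ^ ms a \<le> dirichlet_pmf n K (\<theta> K) a * real K ^ n \<and>
      dirichlet_pmf n K (\<theta> K) a * real K ^ n \<le> C2 a * real K ^ ms a) sequentially"
    using C finF by (intro eventually_ball_finite) auto
  have Bpos: "(\<Sum>a\<in>F. C2 a) > 0" using C finF False by (intro sum_pos) auto
  have "eventually (\<lambda>K. C1 as * real K ^ M \<le> dirichlet_law n K (\<theta> K) F * real K ^ n \<and>
      dirichlet_law n K (\<theta> K) F * real K ^ n \<le> (\<Sum>a\<in>F. C2 a) * real K ^ M) sequentially"
    using evall eventually_ge_at_top[of 1]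
  proof eventually_elim
    case (elim K)
    have FI: "F \<inter> alloc_space n = F" using F by blast
    have lawe: "dirichlet_law n K (\<theta> K) F * real K ^ n = (\<Sum>a\<in>F. dirichlet_pmf n K (\<theta> K) a * real K ^ n)"
      unfolding dirichlet_law_def FI by (simp add: sum_distrib_right)
    have nn: "0 \<le> dirichlet_pmf n K (\<theta> K) a * real K ^ n" if "a \<in> F" for a
    proof -
      have "0 < C1 a" using C that by blast
      then have "0 \<le> C1 a * real K ^ ms a" by simp
      then show ?thesis using elim that by (meson order_trans)
    qed
    have "C1 as * real K ^ M \<le> dirichlet_pmf n K (\<theta> K) as * real K ^ n"
      using elim as by metis
    also have "\<dots> \<le> (\<Sum>a\<in>F. dirichlet_pmf n K (\<theta> K) a * real K ^ n)"
      using finF as nn by (intro member_le_sum) auto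
    finally have lo: "C1 as * real K ^ M \<le> dirichlet_law n K (\<theta> K) F * real K ^ n" using lawe by simp
    have "(\<Sum>a\<in>F. dirichlet_pmf n K (\<theta> K) a * real K ^ n) \<le> (\<Sum>a\<in>F. C2 a * real K ^ M)"
    proof (intro sum_mono)
      fix a assume a: "a \<in> F"
      have "dirichlet_pmf n K (\<theta> K) a * real K ^ n \<le> C2 a * real K ^ ms a" using elim a by blast
      also have "\<dots> \<le> C2 a * real K ^ M"
        using C a msM[OF a] elim by (intro mult_left_mono power_increasing) auto
      finally show "dirichlet_pmf n K (\<theta> K) a * real K ^ n \<le> C2 a * real K ^ M" .
    qed
    then have hi: "dirichlet_law n K (\<theta> K) F * real K ^ n \<le> (\<Sum>a\<in>F. C2 a) * real K ^ M"
      using lawe by (simp add: sum_distrib_right)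
    show ?case using lo hi by blast
  qed
  then have lim: "((\<lambda>K. ereal (1 / ln (real K)) * elog (dirichlet_law n K (\<theta> K) F)) \<longlongrightarrow> ereal (real M - real n)) sequentially"
    using C as Bpos by (intro lim_from_bounds) auto
  have "(INF x\<in>F. I_esf n x) = I_esf n as"
  proof (rule antisym)
    show "(INF x\<in>F. I_esf n x) \<le> I_esf n as" using as by (intro INF_lower)
    show "I_esf n as \<le> (INF x\<in>F. I_esf n x)"
    proof (intro INF_greatest)
      fix x assume "x \<in> F"
      then have "ms x \<le> ms as" using msM as by simp
      then have "real (ms x) \<le> real (ms as)" by simp
      then show "I_esf n as \<le> I_esf n x" unfolding I_esf_eq ms_def by (simp del: of_nat_sum)
    qed
  qed
  then have "- (INF x\<in>F. I_esf n x) = ereal (real M - real n)"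
    using as unfolding I_esf_eq ms_def by simp
  then show ?thesis using lim by simp
qed

theorem theorem3p4:
  fixes n :: nat and \<theta> :: "nat \<Rightarrow> real" and c :: ereal
  assumes "n \<ge> 1"
    and "\<And>K. \<theta> K > 0"
    and "c > 0"
    and "((\<lambda>K. ereal (\<theta> K / real K)) \<longlongrightarrow> c) sequentially"
  shows "ldp (\<lambda>K. dirichlet_law n K (\<theta> K)) (\<lambda>K. ln (real K)) (I_esf n)
             (discrete_topology (alloc_space n))"
proof -
  obtain \<delta> :: real where \<delta>: "\<delta> > 0" "ereal \<delta> < c"
  proof (cases c)
    case (real r)
    then show ?thesis using assms(3) that[of "r/2"] by simp
  next
    case PInf
    then show ?thesis using that[of 1] by simp
  next
    case MInf
    then show ?thesis using assms(3) by simp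
  qed
  have ev: "eventually (\<lambda>K. \<delta> < \<theta> K / real K) sequentially"
    using order_tendstoD(1)[OF assms(4) \<delta>(2)] by simp
  note kl = key_limit[OF \<delta>(1) ev]
  show ?thesis unfolding ldp_def
  proof (intro conjI allI impI ballI)
    fix x assume "x \<in> topspace (discrete_topology (alloc_space n))"
    then have xa: "x \<in> alloc_space n" by simp
    have h: "(\<Sum>i<n. real (x!i)) \<le> real n" using alloc_sum_le[OF xa] by (metis of_nat_sum of_nat_le_iff)
    then show "I_esf n x \<ge> 0" by (simp add: I_esf_def)
  next
    fix \<alpha> show "closedin (discrete_topology (alloc_space n)) {x \<in> topspace (discrete_topology (alloc_space n)). I_esf n x \<le> ereal \<alpha>}"
      by auto
  next
    fix F assume "closedin (discrete_topology (alloc_space n)) F"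
    then have "F \<subseteq> alloc_space n" by simp
    from lim_imp_Limsup[OF trivial_limit_sequentially kl[OF this]]
    show "limsup (\<lambda>K. ereal (1 / ln (real K)) * elog (dirichlet_law n K (\<theta> K) F)) \<le> - (INF x\<in>F. I_esf n x)"
      by simp
  next
    fix F assume "openin (discrete_topology (alloc_space n)) F"
    then have "F \<subseteq> alloc_space n" by simp
    from lim_imp_Liminf[OF trivial_limit_sequentially kl[OF this]]
    show "liminf (\<lambda>K. ereal (1 / ln (real K)) * elog (dirichlet_law n K (\<theta> K) F)) \<ge> - (INF x\<in>F. I_esf n x)"
      by simp
  qed
qed

end
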